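(* Let $\mathbb{X}\subseteq\mathbb{P}^2$ be a $\Bbbk$-configuration of type $(1,2,\dots,s)$ with $s\ge2$, defined by subsets $\mathbb{X}_1,\dots,\mathbb{X}_s$ and lines $\mathbb{L}_1,\dots,\mathbb{L}_s$, with $\mathbb{X}_1=\{P\}$, and suppose that no line of $\mathbb{P}^2$ passing through $P$ contains $s$ points of $\mathbb{X}$. Suppose coordinates are chosen so that $P=[1:0:0]$ and $\mathbb{X}_2=\{[0:1:0],[0:0:1]\}$. Let $\mathbb{Y}=\mathbb{X}_2\cup\cdots\cup\mathbb{X}_s=\mathbb{X}\setminus\{P\}$. Then for all integers $m\ge s+1$, $\mathbf{H}_{R/(I_{m\mathbb{Y}}+I_P^m)}(ms-2)=0$, i.e. $(I_{m\mathbb{Y}}+I_P^m)_{ms-2}=R_{ms-2}$.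
   Context: $\Bbbk$ is an algebraically closed field and $R=\Bbbk[x_0,x_1,x_2]$. A $\Bbbk$-configuration of type $(d_1,\dots,d_s)$ is a finite set $\mathbb{X}\subseteq\mathbb{P}^2$ for which there exist integers $1\le d_1<\cdots<d_s$, subsets $\mathbb{X}_1,\dots,\mathbb{X}_s$ of $\mathbb{X}$ and distinct lines $\mathbb{L}_1,\dots,\mathbb{L}_s\subseteq\mathbb{P}^2$ such that (1) $\mathbb{X}=\bigcup_{i=1}^s\mathbb{X}_i$; (2) $|\mathbb{X}_i|=d_i$ and $\mathbb{X}_i\subseteq\mathbb{L}_i$ for each $i$; (3) for $1<i\le s$, $\mathbb{L}_i$ contains no point of $\mathbb{X}_j$ for any $j<i$. $I_P\subseteq R$ denotes the ideal of a point $P$ (so $I_{[1:0:0]}=\langle x_1,x_2\rangle$); for a finite set $\mathbb{Y}=\{Q_1,\dots,Q_n\}$, $I_{m\mathbb{Y}}=I_{Q_1}^m\cap\cdots\cap I_{Q_n}^m$. For a homogeneous ideal $I$, $\mathbf{H}_{R/I}(t)=\dim_\Bbbk R_t-\dim_\Bbbk I_t$. *)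

theory Defs
  imports "HOL-Library.Poly_Mapping" "HOL-Library.Product_Plus"
    "HOL-Computational_Algebra.Polynomial"
begin

text \<open>Monomials x0^i x1^j x2^k are exponent triples (i,j,k); the polynomial ring
  R = k[x0,x1,x2] is the ring of finitely supported coefficient functions
  (convolution product from Poly_Mapping).\<close>

type_synonym monom = "nat \<times> nat \<times> nat"
type_synonym 'a mpoly3 = "monom \<Rightarrow>\<^sub>0 'a"
type_synonym 'a pt3 = "'a \<times> 'a \<times> 'a"

definition alg_closed :: "'a::field itself \<Rightarrow> bool" where
  "alg_closed _ \<longleftrightarrow> (\<forall>p :: 'a poly. degree p > 0 \<longrightarrow> (\<exists>x. poly p x = 0))"

definition mdeg :: "monom \<Rightarrow> nat" where
  "mdeg m = fst m + fst (snd m) + snd (snd m)"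

definition homog :: "nat \<Rightarrow> 'a::comm_ring_1 mpoly3 set" where
  "homog t = {f. \<forall>m\<in>Poly_Mapping.keys f. mdeg m = t}"

definition eval3 :: "'a::comm_ring_1 mpoly3 \<Rightarrow> 'a pt3 \<Rightarrow> 'a" where
  "eval3 f Q = (\<Sum>m\<in>Poly_Mapping.keys f. Poly_Mapping.lookup f m * fst Q ^ fst m * fst (snd Q) ^ fst (snd m)
                              * snd (snd Q) ^ snd (snd m))"

definition is_ideal :: "'a::comm_ring_1 mpoly3 set \<Rightarrow> bool" where
  "is_ideal I \<longleftrightarrow> 0 \<in> I \<and> (\<forall>a\<in>I. \<forall>b\<in>I. a + b \<in> I) \<and> (\<forall>r. \<forall>a\<in>I. r * a \<in> I)"

definition ideal_gen :: "'a::comm_ring_1 mpoly3 set \<Rightarrow> 'a mpoly3 set" where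
  "ideal_gen S = \<Inter>{I. is_ideal I \<and> S \<subseteq> I}"

definition ideal_pow :: "'a::comm_ring_1 mpoly3 set \<Rightarrow> nat \<Rightarrow> 'a mpoly3 set" where
  "ideal_pow I m = ideal_gen {prod_list fs | fs. length fs = m \<and> set fs \<subseteq> I}"

definition ideal_sum :: "'a::comm_ring_1 mpoly3 set \<Rightarrow> 'a mpoly3 set \<Rightarrow> 'a mpoly3 set" where
  "ideal_sum I J = {a + b | a b. a \<in> I \<and> b \<in> J}"

definition ideal_pt :: "'a::comm_ring_1 pt3 \<Rightarrow> 'a mpoly3 set" where
  "ideal_pt Q = ideal_gen {f. \<exists>t. f \<in> homog t \<and> eval3 f Q = 0}"

definition ideal_fat :: "'a::comm_ring_1 pt3 set \<Rightarrow> nat \<Rightarrow> 'a mpoly3 set" where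
  "ideal_fat Y m = (\<Inter>Q\<in>Y. ideal_pow (ideal_pt Q) m)"

text \<open>Projective points / lines are represented by nonzero triples; two represent the same
  object iff proportional.\<close>
definition proportional :: "'a::field pt3 \<Rightarrow> 'a pt3 \<Rightarrow> bool" where
  "proportional u v \<longleftrightarrow> (\<exists>c. c \<noteq> 0 \<and> v = (c * fst u, c * fst (snd u), c * snd (snd u)))"

definition on_line :: "'a::field pt3 \<Rightarrow> 'a pt3 \<Rightarrow> bool" where
  "on_line L Q \<longleftrightarrow> fst L * fst Q + fst (snd L) * fst (snd Q) + snd (snd L) * snd (snd Q) = 0"

definition proj_pointset :: "'a::field pt3 set \<Rightarrow> bool" where
  "proj_pointset X \<longleftrightarrow> finite X \<and> 0 \<notin> X \<and>
     (\<forall>u\<in>X. \<forall>v\<in>X. proportional u v \<longrightarrow> u = v)"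

definition kconfig_with ::
  "'a::field pt3 set \<Rightarrow> nat \<Rightarrow> (nat \<Rightarrow> nat) \<Rightarrow> (nat \<Rightarrow> 'a pt3 set) \<Rightarrow> (nat \<Rightarrow> 'a pt3) \<Rightarrow> bool" where
  "kconfig_with X s d Xs Ls \<longleftrightarrow>
     proj_pointset X \<and> s \<ge> 1 \<and> 1 \<le> d 1 \<and> (\<forall>i\<in>{1..<s}. d i < d (Suc i)) \<and>
     X = (\<Union>i\<in>{1..s}. Xs i) \<and>
     (\<forall>i\<in>{1..s}. Ls i \<noteq> 0) \<and>
     (\<forall>i\<in>{1..s}. \<forall>j\<in>{1..s}. proportional (Ls i) (Ls j) \<longrightarrow> i = j) \<and>
     (\<forall>i\<in>{1..s}. card (Xs i) = d i \<and> Xs i \<subseteq> X \<and> (\<forall>Q\<in>Xs i. on_line (Ls i) Q)) \<and>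
     (\<forall>i\<in>{1..s}. \<forall>j\<in>{1..<i}. \<forall>Q\<in>Xs j. \<not> on_line (Ls i) Q)"

end

theory Submission
  imports Defs
begin


definition lin :: "'a::comm_ring_1 pt3 \<Rightarrow> 'a mpoly3" where
  "lin c = Poly_Mapping.single (1,0,0) (fst c) + Poly_Mapping.single (0,1,0) (fst (snd c))
          + Poly_Mapping.single (0,0,1) (snd (snd c))"

definition lvl :: "monom \<Rightarrow> nat" where "lvl m = fst (snd m) + snd (snd m)"

lemma mdeg_add[simp]: "mdeg (a + b) = mdeg a + mdeg b"
  by (cases a; cases b) (auto simp: mdeg_def)
lemma lvl_add[simp]: "lvl (a + b) = lvl a + lvl b"
  by (cases a; cases b) (auto simp: lvl_def)
lemma mdeg_zero[simp]: "mdeg 0 = 0" by (simp add: mdeg_def zero_prod_def)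
lemma lvl_zero[simp]: "lvl 0 = 0" by (simp add: lvl_def zero_prod_def)

lemma keys_mult_sub:
  fixes f g :: "'a::comm_ring_1 mpoly3" and \<phi> :: "monom \<Rightarrow> nat"
  assumes "Poly_Mapping.keys f \<subseteq> {m. \<phi> m \<ge> i}" "Poly_Mapping.keys g \<subseteq> {m. \<phi> m \<ge> j}"
    and "\<And>a b. \<phi> (a + b) = \<phi> a + \<phi> b"
  shows "Poly_Mapping.keys (f * g) \<subseteq> {m. \<phi> m \<ge> i + j}"
proof
  fix x assume "x \<in> Poly_Mapping.keys (f * g)"
  then obtain a b where "x = a + b" "a \<in> Poly_Mapping.keys f" "b \<in> Poly_Mapping.keys g"
    using keys_mult[of f g] by blast
  then have "i \<le> \<phi> a" "j \<le> \<phi> b" "x = a + b" using assms(1,2) by auto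
  then show "x \<in> {m. \<phi> m \<ge> i + j}" using assms(3)[of a b] by (simp add: add_mono)
qed

lemma homog_mult:
  fixes f g :: "'a::comm_ring_1 mpoly3"
  assumes "f \<in> homog i" "g \<in> homog j" shows "f * g \<in> homog (i + j)"
  unfolding homog_def
proof (intro CollectI ballI)
  fix x assume "x \<in> Poly_Mapping.keys (f * g)"
  then obtain a b where "x = a + b" "a \<in> Poly_Mapping.keys f" "b \<in> Poly_Mapping.keys g"
    using keys_mult[of f g] by blast
  then show "mdeg x = i + j" using assms by (simp add: homog_def)
qed

lemma keys_add_sub: "Poly_Mapping.keys f \<subseteq> A \<Longrightarrow> Poly_Mapping.keys g \<subseteq> A \<Longrightarrow> Poly_Mapping.keys (f + g) \<subseteq> A"
  using keys_add[of f g] by blast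

lemma single000[simp]: "Poly_Mapping.single (0::nat,0::nat,0::nat) 1 = 1"
  by (simp add: zero_prod_def[symmetric])

lemma eval3_gen:
  fixes f :: "'a::comm_ring_1 mpoly3"
  assumes "finite S" "Poly_Mapping.keys f \<subseteq> S"
  shows "eval3 f Q = (\<Sum>m\<in>S. Poly_Mapping.lookup f m * fst Q ^ fst m * fst (snd Q) ^ fst (snd m)
                              * snd (snd Q) ^ snd (snd m))"
  unfolding eval3_def
  by (rule sum.mono_neutral_left) (use assms in \<open>auto simp: in_keys_iff\<close>)

lemma eval3_add: "eval3 (f + g) Q = eval3 f Q + eval3 (g :: 'a::comm_ring_1 mpoly3) Q"
proof -
  have S: "finite (Poly_Mapping.keys f \<union> Poly_Mapping.keys g)" by (simp add: finite_keys)
  show ?thesis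
    using keys_add[of f g]
    by (simp add: eval3_gen[OF S] lookup_add sum.distrib distrib_right)
qed

lemma eval3_single: "eval3 (Poly_Mapping.single m (c::'a::comm_ring_1)) Q =
   c * fst Q ^ fst m * fst (snd Q) ^ fst (snd m) * snd (snd Q) ^ snd (snd m)"
  by (subst eval3_gen[of "{m}"]) auto

lemma eval3_lin: "eval3 (lin c) Q = fst c * fst Q + fst (snd c) * fst (snd Q) + snd (snd c) * snd (snd Q)"
  by (simp add: lin_def eval3_add eval3_single)

lemma lin_homog: "lin c \<in> homog 1"
proof -
  have "Poly_Mapping.keys (lin c) \<subseteq> {(1,0,0),(0,1,0),(0,0,1)}"
    unfolding lin_def by (intro keys_add_sub) auto
  then show ?thesis by (auto simp: homog_def mdeg_def)
qed


lemma is_ideal_gen: "is_ideal (ideal_gen S)"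
  unfolding ideal_gen_def is_ideal_def by (auto simp: is_ideal_def)

lemma gen_sub: "S \<subseteq> ideal_gen S"
  unfolding ideal_gen_def by blast

lemma ideal_0: "is_ideal I \<Longrightarrow> 0 \<in> I" by (simp add: is_ideal_def)
lemma ideal_add: "is_ideal I \<Longrightarrow> a \<in> I \<Longrightarrow> b \<in> I \<Longrightarrow> a + b \<in> I" by (simp add: is_ideal_def)
lemma ideal_mult: "is_ideal I \<Longrightarrow> a \<in> I \<Longrightarrow> r * a \<in> I" by (simp add: is_ideal_def)
lemma ideal_multr: "is_ideal I \<Longrightarrow> a \<in> I \<Longrightarrow> a * r \<in> (I :: 'a::comm_ring_1 mpoly3 set)"
  by (metis ideal_mult mult.commute)
lemma ideal_diff: "is_ideal I \<Longrightarrow> a \<in> I \<Longrightarrow> b \<in> I \<Longrightarrow> a - b \<in> (I :: 'a::comm_ring_1 mpoly3 set)"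
proof -
  assume "is_ideal I" "a \<in> I" "b \<in> I"
  then have "a + (-1) * b \<in> I" using ideal_add[of I a "(-1)*b"] ideal_mult[of I b "-1"] by simp
  then show ?thesis by simp
qed

lemma ideal_sum_fin: "finite A \<Longrightarrow> is_ideal I \<Longrightarrow> (\<forall>x\<in>A. f x \<in> I) \<Longrightarrow> sum f A \<in> I"
  by (induction A rule: finite_induct) (auto simp: ideal_0 ideal_add)

lemma is_ideal_sum:
  fixes I J :: "'a::comm_ring_1 mpoly3 set"
  assumes I: "is_ideal I" and J: "is_ideal J" shows "is_ideal (ideal_sum I J)"
  unfolding is_ideal_def
proof (intro conjI ballI allI)
  show "0 \<in> ideal_sum I J" unfolding ideal_sum_def using ideal_0[OF I] ideal_0[OF J] by force
next
  fix x y assume "x \<in> ideal_sum I J" "y \<in> ideal_sum I J"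
  then obtain a b a' b' where "x = a + b" "a \<in> I" "b \<in> J" "y = a' + b'" "a' \<in> I" "b' \<in> J"
    unfolding ideal_sum_def by blast
  moreover have "x + y = (a + a') + (b + b')" using calculation by (simp add: algebra_simps)
  ultimately show "x + y \<in> ideal_sum I J" unfolding ideal_sum_def
    using ideal_add[OF I] ideal_add[OF J] by blast
next
  fix r x assume "x \<in> ideal_sum I J"
  then obtain a b where "x = a + b" "a \<in> I" "b \<in> J" unfolding ideal_sum_def by blast
  moreover have "r * x = r * a + r * b" using calculation by (simp add: algebra_simps)
  ultimately show "r * x \<in> ideal_sum I J" unfolding ideal_sum_def
    using ideal_mult[OF I] ideal_mult[OF J] by blast
qed

lemma is_ideal_pow: "is_ideal (ideal_pow I m)"
  unfolding ideal_pow_def by (rule is_ideal_gen)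

lemma is_ideal_fat: "is_ideal (ideal_fat Y m)"
  unfolding ideal_fat_def is_ideal_def using is_ideal_pow[unfolded is_ideal_def] by auto

section \<open>Counting vanishing factors\<close>

definition cnt :: "'a::field pt3 \<Rightarrow> 'a pt3 list \<Rightarrow> nat" where
  "cnt Q cs = length (filter (\<lambda>c. on_line c Q) cs)"

lemma cnt_append[simp]: "cnt Q (xs @ ys) = cnt Q xs + cnt Q ys"
  by (simp add: cnt_def)
lemma cnt_replicate[simp]: "cnt Q (replicate n c) = (if on_line c Q then n else 0)"
  by (simp add: cnt_def)

lemma cnt_concat: "j \<in> set js \<Longrightarrow> cnt Q (concat (map f js)) \<ge> cnt Q (f j)"
  by (induction js) (auto simp: cnt_def)

lemma cnt_map_all: "(\<forall>x\<in>set xs. on_line (g x) Q) \<Longrightarrow> cnt Q (map g xs) = length xs"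
  by (induction xs) (auto simp: cnt_def)

lemma cnt_map_one: "x \<in> set xs \<Longrightarrow> on_line (g x) Q \<Longrightarrow> cnt Q (map g xs) \<ge> 1"
  by (induction xs) (auto simp: cnt_def)

lemma prod_app: "prod_list (map lin (xs @ ys)) = prod_list (map lin xs) * (prod_list (map lin ys) :: 'a::comm_ring_1 mpoly3)"
  by (induction xs) (auto simp: mult.assoc)

lemma prod_filter:
  "prod_list (map lin cs) = prod_list (map lin (filter p cs)) * prod_list (map lin (filter (\<lambda>c. \<not> p c) cs))"
  by (induction cs) (auto simp: mult_ac)

lemma lin_in_pt: "on_line c Q \<Longrightarrow> lin c \<in> ideal_pt (Q :: 'a::field pt3)"
  unfolding ideal_pt_def
  apply (rule subsetD[OF gen_sub])
  using lin_homog[of c] by (auto simp: eval3_lin on_line_def)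

lemma pow_mem:
  fixes Q :: "'a::field pt3"
  assumes "cnt Q cs \<ge> m"
  shows "prod_list (map lin cs) \<in> ideal_pow (ideal_pt Q) m"
proof -
  define vs where "vs = filter (\<lambda>c. on_line c Q) cs"
  have lv: "length vs \<ge> m" using assms by (simp add: vs_def cnt_def)
  have "prod_list (map lin (take m vs)) \<in> ideal_pow (ideal_pt Q) m"
    unfolding ideal_pow_def
    apply (rule subsetD[OF gen_sub])
    apply (rule CollectI, rule exI[of _ "map lin (take m vs)"])
    using lv by (auto simp: vs_def dest!: in_set_takeD intro!: lin_in_pt)
  then have "prod_list (map lin (take m vs)) * (prod_list (map lin (drop m vs)) *
      prod_list (map lin (filter (\<lambda>c. \<not> on_line c Q) cs))) \<in> ideal_pow (ideal_pt Q) m"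
    by (rule ideal_multr[OF is_ideal_pow])
  moreover have "prod_list (map lin cs) = prod_list (map lin (take m vs)) * (prod_list (map lin (drop m vs)) *
      prod_list (map lin (filter (\<lambda>c. \<not> on_line c Q) cs)))"
    apply (subst prod_filter[of _ "\<lambda>c. on_line c Q"])
    using prod_app[of "take m vs" "drop m vs"] by (simp add: vs_def mult.assoc)
  ultimately show ?thesis by simp
qed

lemma fat_mem:
  fixes Y :: "'a::field pt3 set"
  assumes "\<forall>Q\<in>Y. cnt Q cs \<ge> m"
  shows "prod_list (map lin cs) \<in> ideal_fat Y m"
  using assms pow_mem unfolding ideal_fat_def by blast

section \<open>Leading terms\<close>

lemma keys_mult_lvl:
  fixes f g :: "'a::comm_ring_1 mpoly3"
  assumes "Poly_Mapping.keys f \<subseteq> {m. i \<le> lvl m}" "Poly_Mapping.keys g \<subseteq> {m. j \<le> lvl m}"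
  shows "Poly_Mapping.keys (f * g) \<subseteq> {m. i + j \<le> lvl m}"
  using keys_mult_sub[where \<phi>=lvl and i=i and j=j and f=f and g=g] assms by simp

lemma keys_lvl0: "Poly_Mapping.keys f \<subseteq> {m. 0 \<le> lvl m}" by auto

lemma lead:
  "\<exists>r. prod_list (map lin cs) = Poly_Mapping.single (length cs,0,0) (prod_list (map fst cs)) + r
      \<and> Poly_Mapping.keys (r :: 'a::comm_ring_1 mpoly3) \<subseteq> {\<mu>. 1 \<le> lvl \<mu>}"
proof (induction cs)
  case Nil
  have "(0::nat,0::nat,0::nat) = 0" by (simp add: zero_prod_def)
  then show ?case by (intro exI[of _ 0]) simp
next
  case (Cons c cs)
  then obtain r where r: "prod_list (map lin cs) = Poly_Mapping.single (length cs,0,0) (prod_list (map fst cs)) + r"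
    "Poly_Mapping.keys (r :: 'a mpoly3) \<subseteq> {\<mu>. 1 \<le> lvl \<mu>}" by blast
  define v :: "'a mpoly3" where "v = Poly_Mapping.single (0,1,0) (fst (snd c)) + Poly_Mapping.single (0,0,1) (snd (snd c))"
  define a :: "'a mpoly3" where "a = Poly_Mapping.single (1,0,0) (fst c)"
  define p :: "'a mpoly3" where "p = Poly_Mapping.single (length cs,0,0) (prod_list (map fst cs))"
  have lc: "lin c = a + v" by (simp add: lin_def a_def v_def add.assoc)
  have kv: "Poly_Mapping.keys v \<subseteq> {\<mu>. 1 \<le> lvl \<mu>}"
    unfolding v_def by (rule keys_add_sub) (auto simp: lvl_def)
  have "prod_list (map lin (c # cs)) = a * p + (a * r + v * (p + r))"
    using r(1) by (simp add: lc p_def algebra_simps)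
  moreover have "a * p = Poly_Mapping.single (length (c#cs),0,0) (prod_list (map fst (c#cs)))"
    by (simp add: a_def p_def mult_single)
  moreover have "Poly_Mapping.keys (a * r + v * (p + r)) \<subseteq> {\<mu>. 1 \<le> lvl \<mu>}"
    using keys_mult_lvl[OF keys_lvl0 r(2), of a] keys_mult_lvl[OF kv keys_lvl0, of "p + r"]
    by (intro keys_add_sub) auto
  ultimately show ?case by metis
qed

lemma lin_e1: "lin (0,1,0) = Poly_Mapping.single (0,1,0) (1::'a::comm_ring_1)" by (simp add: lin_def)
lemma lin_e2: "lin (0,0,1) = Poly_Mapping.single (0,0,1) (1::'a::comm_ring_1)" by (simp add: lin_def)
lemma lin_e0: "lin (1,0,0) = Poly_Mapping.single (1,0,0) (1::'a::comm_ring_1)" by (simp add: lin_def)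

lemma rep_e1: "prod_list (map lin (replicate b (0,1,0))) = Poly_Mapping.single (0,b,0) (1::'a::comm_ring_1)"
  by (induction b) (auto simp: lin_e1 mult_single)
lemma rep_e2: "prod_list (map lin (replicate b (0,0,1))) = Poly_Mapping.single (0,0,b) (1::'a::comm_ring_1)"
  by (induction b) (auto simp: lin_e2 mult_single)
lemma rep_e0: "prod_list (map lin (replicate b (1,0,0))) = Poly_Mapping.single (b,0,0) (1::'a::comm_ring_1)"
  by (induction b) (auto simp: lin_e0 mult_single)

lemma prod_bc: "prod_list (map lin (replicate b (0,1,0) @ replicate c (0,0,1) @ cs)) =
   Poly_Mapping.single (0,b,c) (1::'a::comm_ring_1) * prod_list (map lin cs)"
  by (simp only: prod_app rep_e1 rep_e2) (simp add: mult_single mult.assoc[symmetric])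

lemma mono_prod: "prod_list (map lin (replicate b (0,1,0) @ replicate c (0,0,1) @ replicate a (1,0,0))) =
   Poly_Mapping.single (a,b,c) (1::'a::comm_ring_1)"
  by (simp only: prod_bc rep_e0 mult_single) simp

lemma homog_one: "1 \<in> homog 0" by (simp add: homog_def)

lemma prod_homog: "prod_list (map lin cs) \<in> homog (length cs)"
proof (induction cs)
  case Nil then show ?case using homog_one by simp
next
  case (Cons c cs) then show ?case using homog_mult[OF lin_homog Cons] by simp
qed

lemma single_homog: "mdeg \<mu> = d \<Longrightarrow> Poly_Mapping.single \<mu> c \<in> homog d"
  by (simp add: homog_def)

lemma homog_diff: "f \<in> homog d \<Longrightarrow> g \<in> homog d \<Longrightarrow> f - g \<in> homog (d::nat)"
  using keys_diff[of f g] by (auto simp: homog_def)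

lemma expand: "f = (\<Sum>\<mu>\<in>Poly_Mapping.keys f. Poly_Mapping.single \<mu> (Poly_Mapping.lookup f \<mu>))"
  by (rule poly_mapping_eqI) (auto simp: lookup_sum lookup_single when_def in_keys_iff)

lemma span:
  fixes J :: "'a::comm_ring_1 mpoly3 set"
  assumes J: "is_ideal J" and good: "\<forall>\<mu>. mdeg \<mu> = d \<and> k \<le> lvl \<mu> \<longrightarrow> Poly_Mapping.single \<mu> 1 \<in> J"
    and f: "f \<in> homog d" "Poly_Mapping.keys f \<subseteq> {\<mu>. k \<le> lvl \<mu>}"
  shows "f \<in> J"
proof -
  have "(\<Sum>\<mu>\<in>Poly_Mapping.keys f. Poly_Mapping.single \<mu> (Poly_Mapping.lookup f \<mu>)) \<in> J"
  proof (rule ideal_sum_fin[OF finite_keys J], intro ballI)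
    fix \<mu> assume "\<mu> \<in> Poly_Mapping.keys f"
    then have "mdeg \<mu> = d" "k \<le> lvl \<mu>" using f by (auto simp: homog_def)
    then have "Poly_Mapping.single \<mu> 1 \<in> J" using good by blast
    then have "Poly_Mapping.single 0 (Poly_Mapping.lookup f \<mu>) * Poly_Mapping.single \<mu> 1 \<in> J"
      by (rule ideal_mult[OF J])
    then show "Poly_Mapping.single \<mu> (Poly_Mapping.lookup f \<mu>) \<in> J" by (simp add: mult_single)
  qed
  then show ?thesis using expand[of f] by simp
qed

lemma step:
  fixes J :: "'a::field mpoly3 set"
  assumes J: "is_ideal J" and good: "\<forall>\<mu>. mdeg \<mu> = d \<and> b + c + 1 \<le> lvl \<mu> \<longrightarrow> Poly_Mapping.single \<mu> 1 \<in> J"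
    and G: "prod_list (map lin (replicate b (0,1,0) @ replicate c (0,0,1) @ cs)) \<in> J"
    and len: "length cs + b + c = d" and nz: "prod_list (map fst cs) \<noteq> 0"
  shows "Poly_Mapping.single (length cs, b, c) 1 \<in> J"
proof -
  define G where "G = prod_list (map lin (replicate b (0,1,0) @ replicate c (0,0,1) @ cs))"
  define \<pi> where "\<pi> = prod_list (map fst cs)"
  obtain r where r: "prod_list (map lin cs) = Poly_Mapping.single (length cs,0,0) \<pi> + r"
    "Poly_Mapping.keys (r :: 'a mpoly3) \<subseteq> {\<mu>. 1 \<le> lvl \<mu>}" using lead[of cs] \<pi>_def by blast
  define r' where "r' = Poly_Mapping.single (0,b,c) (1::'a) * r"
  have Gr: "G = Poly_Mapping.single (length cs, b, c) \<pi> + r'"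
    unfolding G_def r'_def prod_bc r(1) distrib_left mult_single by simp
  have kr': "Poly_Mapping.keys r' \<subseteq> {\<mu>. b + c + 1 \<le> lvl \<mu>}"
    unfolding r'_def by (rule keys_mult_lvl[OF _ r(2)]) (auto simp: lvl_def)
  have "length (replicate b (0::'a,1::'a,0::'a) @ replicate c (0,0,1) @ cs) = d" using len by simp
  then have hG: "G \<in> homog d" unfolding G_def using prod_homog by metis
  have hs: "Poly_Mapping.single (length cs, b, c) \<pi> \<in> homog d"
    by (rule single_homog) (use len in \<open>simp add: mdeg_def\<close>)
  have "r' = G - Poly_Mapping.single (length cs, b, c) \<pi>" using Gr by simp
  then have "r' \<in> homog d" using homog_diff[OF hG hs] by simp
  then have "r' \<in> J" using span[OF J good _ kr'] by simp
  then have "G - r' \<in> J" using ideal_diff[OF J] G G_def by simp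
  then have "Poly_Mapping.single (length cs, b, c) \<pi> \<in> J" using Gr by simp
  then have "Poly_Mapping.single 0 (inverse \<pi>) * Poly_Mapping.single (length cs, b, c) \<pi> \<in> J"
    by (rule ideal_mult[OF J])
  moreover have "\<pi> \<noteq> 0" using nz \<pi>_def by simp
  ultimately show ?thesis by (simp add: mult_single)
qed



lemma len_crep: "length (concat (map (\<lambda>j. replicate m (f j)) js)) = m * length js"
  by (induction js) auto

lemma prod_crep: "(\<forall>j\<in>set js. fst (f j) \<noteq> (0::'a::field)) \<Longrightarrow>
    prod_list (map fst (concat (map (\<lambda>j. replicate m (f j)) js))) \<noteq> 0"
  by (auto simp: prod_list_zero_iff) (metis fst_conv)

lemma goodk:
  fixes X :: "'a::field pt3 set"
  assumes fin: "finite X" and s: "s \<ge> 2"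
    and sub: "\<forall>k\<in>{3..s}. Xs k \<subseteq> X"
    and disj: "\<forall>i\<in>{3..s}. \<forall>j\<in>{3..s}. i \<noteq> j \<longrightarrow> Xs i \<inter> Xs j = {}"
    and P: "P \<in> X" "on_line L P" and E: "E \<in> X" "on_line L E" and PE: "P \<noteq> E"
    and notin: "\<forall>k\<in>{3..s}. P \<notin> Xs k \<and> E \<notin> Xs k"
    and card: "card {Q\<in>X. on_line L Q} < s"
  shows "\<exists>k\<in>{3..s}. \<forall>Q\<in>Xs k. \<not> on_line L Q"
proof (rule ccontr)
  assume "\<not> ?thesis"
  then have "\<forall>k\<in>{3..s}. \<exists>Q. Q \<in> Xs k \<and> on_line L Q" by blast
  then obtain f where f: "\<forall>k\<in>{3..s}. f k \<in> Xs k \<and> on_line L (f k)"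
    using bchoice[of "{3..s}" "\<lambda>k Q. Q \<in> Xs k \<and> on_line L Q"] by blast
  have inj: "inj_on f {3..s}"
  proof (rule inj_onI)
    fix i j assume ij: "i \<in> {3..s}" "j \<in> {3..s}" "f i = f j"
    show "i = j"
    proof (rule ccontr)
      assume "i \<noteq> j"
      then have "Xs i \<inter> Xs j = {}" using disj ij by blast
      moreover have "f i \<in> Xs i" "f j \<in> Xs j" using f ij(1,2) by blast+
      ultimately show False using ij by auto
    qed
  qed
  define A where "A = insert P (insert E (f ` {3..s}))"
  have "\<forall>k\<in>{3..s}. f k \<in> X \<and> on_line L (f k)" using f sub by blast
  then have "A \<subseteq> {Q\<in>X. on_line L Q}" using P E unfolding A_def by blast
  moreover have "finite {Q\<in>X. on_line L Q}" using fin by simp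
  ultimately have c1: "card A \<le> card {Q\<in>X. on_line L Q}" by (simp add: card_mono)
  have "P \<notin> f ` {3..s}" "E \<notin> f ` {3..s}" using f notin by auto
  then have "card A = card (f ` {3..s}) + 2" using PE unfolding A_def by simp
  also have "card (f ` {3..s}) = s - 2" using card_image[OF inj] by simp
  finally have "card A = s" using s by simp
  then show False using card c1 by simp
qed


lemma arithA: "(s::nat) \<ge> 2 \<Longrightarrow> b + c \<le> 2*m - 2 \<Longrightarrow> m \<ge> 1 \<Longrightarrow>
   (2*m - 2 - b - c) + m * (s - 2) + b + c = m*s - 2"
proof -
  assume a: "s \<ge> 2" "b + c \<le> 2*m - 2" "m \<ge> 1"
  then obtain t where t: "s = t + 2" by (metis add.commute le_Suc_ex)
  show ?thesis using a unfolding t by (simp add: algebra_simps)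
qed

lemma arithB: "3 \<le> (k::nat) \<Longrightarrow> k \<le> s \<Longrightarrow> s + 1 \<le> m \<Longrightarrow>
   (m - k) + (m * (k - 3) + (m - 1) + m * (s - k)) + k + (m - 1) = m*s - 2"
proof -
  assume a: "3 \<le> k" "k \<le> s" "s + 1 \<le> m"
  obtain v where v: "k = v + 3" using a(1) by (metis add.commute le_Suc_ex)
  obtain u where u: "s = k + u" using a(2) by (metis le_Suc_ex)
  obtain w where w: "m = s + 1 + w" using a(3) by (metis le_Suc_ex)
  show ?thesis unfolding w u v by (simp add: algebra_simps)
qed

lemma arithC: "(b::nat) \<le> m - 2 \<Longrightarrow> c \<le> m - 2 \<Longrightarrow> m \<ge> 2 \<Longrightarrow> m \<le> c + (2*m - 2 - b - c)"
  by arith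

lemma arithD: "(b::nat) \<le> m - 2 \<Longrightarrow> c \<le> m - 2 \<Longrightarrow> m \<ge> 2 \<Longrightarrow> m \<le> b + (2*m - 2 - b - c)"
  by arith

lemma arithE: "\<not> (m::nat) - j \<le> x \<Longrightarrow> m - Suc j \<le> x \<Longrightarrow> x = m - Suc j"
  by arith

theorem mainTheorem14:
  fixes X :: "'a::field pt3 set" and s :: nat
    and Xs :: "nat \<Rightarrow> 'a pt3 set" and Ls :: "nat \<Rightarrow> 'a pt3"
  assumes "alg_closed TYPE('a)"
    and "s \<ge> 2"
    and "kconfig_with X s (\<lambda>i. i) Xs Ls"
    and "Xs 1 = {(1, 0, 0)}"
    and "\<forall>L. L \<noteq> 0 \<longrightarrow> on_line L (1, 0, 0) \<longrightarrow> card {Q\<in>X. on_line L Q} < s"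
    and "Xs 2 = {(0, 1, 0), (0, 0, 1)}"
  shows "\<forall>m::nat. m \<ge> s + 1 \<longrightarrow>
           homog (m * s - 2) \<subseteq>
             ideal_sum (ideal_fat (X - {(1, 0, 0)}) m) (ideal_pow (ideal_pt (1, 0, 0)) m)"
proof (intro allI impI)
  fix m :: nat assume m: "m \<ge> s + 1"
  have s2: "s \<ge> 2" by fact
  note kc = assms(3)[unfolded kconfig_with_def]
  have pp: "proj_pointset X" using kc by (elim conjE)
  have finX: "finite X" using pp unfolding proj_pointset_def by (elim conjE)
  have Xun: "X = (\<Union>i\<in>{1..s}. Xs i)" using kc by (elim conjE)
  have C8: "\<forall>i\<in>{1..s}. card (Xs i) = i \<and> Xs i \<subseteq> X \<and> (\<forall>Q\<in>Xs i. on_line (Ls i) Q)"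
    using kc by (elim conjE)
  have C9: "\<forall>i\<in>{1..s}. \<forall>j\<in>{1..<i}. \<forall>Q\<in>Xs j. \<not> on_line (Ls i) Q"
    using kc by (elim conjE)
  have cardXs: "\<And>i. i \<in> {1..s} \<Longrightarrow> card (Xs i) = i" using C8 by blast
  have XsX: "\<And>i. i \<in> {1..s} \<Longrightarrow> Xs i \<subseteq> X" using C8 by blast
  have onL: "\<And>i Q. i \<in> {1..s} \<Longrightarrow> Q \<in> Xs i \<Longrightarrow> on_line (Ls i) Q" using C8 by blast
  have offL: "\<And>i j Q. i \<in> {1..s} \<Longrightarrow> j \<in> {1..<i} \<Longrightarrow> Q \<in> Xs j \<Longrightarrow> \<not> on_line (Ls i) Q"
    using C9 by blast
  have disj: "\<And>i k. i \<in> {1..s} \<Longrightarrow> k \<in> {1..s} \<Longrightarrow> i \<noteq> k \<Longrightarrow> Xs i \<inter> Xs k = {}"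
  proof -
    fix i k assume ik: "i \<in> {1..s}" "k \<in> {1..s}" "i \<noteq> k"
    show "Xs i \<inter> Xs k = {}"
    proof (cases "i < k")
      case True
      have "\<And>Q. Q \<in> Xs i \<Longrightarrow> Q \<notin> Xs k"
      proof -
        fix Q assume "Q \<in> Xs i"
        then have "\<not> on_line (Ls k) Q" using offL[of k i Q] ik True by auto
        then show "Q \<notin> Xs k" using onL[of k Q] ik by blast
      qed
      then show ?thesis by blast
    next
      case False
      then have ki: "k < i" using ik by simp
      have "\<And>Q. Q \<in> Xs k \<Longrightarrow> Q \<notin> Xs i"
      proof -
        fix Q assume "Q \<in> Xs k"
        then have "\<not> on_line (Ls i) Q" using offL[of i k Q] ik ki by auto
        then show "Q \<notin> Xs i" using onL[of i Q] ik by blast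
      qed
      then show ?thesis by blast
    qed
  qed
  have P1: "(1,0,0) \<in> Xs 1" using assms(4) by simp
  have E12: "(0,1,0) \<in> Xs 2" "(0,0,1) \<in> Xs 2" using assms(6) by auto
  have PX: "(1,0,0) \<in> X" using P1 XsX[of 1] s2 by auto
  have E1X: "(0,1,0) \<in> X" and E2X: "(0,0,1) \<in> X" using E12 XsX[of 2] s2 by auto
  have Lfst: "\<And>k. k \<in> {2..s} \<Longrightarrow> fst (Ls k) \<noteq> 0"
  proof -
    fix k assume k: "k \<in> {2..s}"
    then have "\<not> on_line (Ls k) (1,0,0)" using offL[of k 1 "(1,0,0)"] P1 by auto
    then show "fst (Ls k) \<noteq> 0" by (simp add: on_line_def)
  qed
  have notinP: "\<And>k. k \<in> {2..s} \<Longrightarrow> (1,0,0) \<notin> Xs k"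
  proof -
    fix k :: nat assume k: "k \<in> {2..s}"
    then have "Xs 1 \<inter> Xs k = {}" using disj[of 1 k] s2 by auto
    then show "(1,0,0) \<notin> Xs k" using P1 by blast
  qed
  have notinE: "\<And>k E. k \<in> {3..s} \<Longrightarrow> E \<in> Xs 2 \<Longrightarrow> E \<notin> Xs k"
  proof -
    fix k :: nat and E assume k: "k \<in> {3..s}" and E: "E \<in> Xs 2"
    then have "Xs 2 \<inter> Xs k = {}" using disj[of 2 k] s2 by auto
    then show "E \<notin> Xs k" using E by blast
  qed
  have sub3: "\<forall>k\<in>{3..s}. Xs k \<subseteq> X" using XsX by auto
  have disj3: "\<forall>i\<in>{3..s}. \<forall>j\<in>{3..s}. i \<noteq> j \<longrightarrow> Xs i \<inter> Xs j = {}" using disj by auto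
  have notin3: "\<forall>k\<in>{3..s}. (1,0,0) \<notin> Xs k \<and> (0,1,0) \<notin> Xs k \<and> (0,0,1) \<notin> Xs k"
    using notinP notinE E12 by auto
  have ptcases: "\<And>Q. Q \<in> X - {(1,0,0)} \<Longrightarrow> Q = (0,1,0) \<or> Q = (0,0,1) \<or> (\<exists>k\<in>{3..s}. Q \<in> Xs k)"
  proof -
    fix Q assume Q: "Q \<in> X - {(1,0,0)}"
    then obtain i where i: "i \<in> {1..s}" "Q \<in> Xs i" using Xun by blast
    show "Q = (0,1,0) \<or> Q = (0,0,1) \<or> (\<exists>k\<in>{3..s}. Q \<in> Xs k)"
    proof (cases "i = 1")
      case True then show ?thesis using i Q assms(4) by simp
    next
      case False
      show ?thesis
      proof (cases "i = 2")
        case True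
        then have "Q \<in> Xs 2" using i by simp
        then have "Q = (0,1,0) \<or> Q = (0,0,1)" using assms(6) by simp
        then show ?thesis by blast
      next
        case False2: False
        then have "i \<in> {3..s}" using i False by auto
        then show ?thesis using i by blast
      qed
    qed
  qed
  define Yp where "Yp = X - {(1::'a,0::'a,0::'a)}"
  define J where "J = ideal_sum (ideal_fat Yp m) (ideal_pow (ideal_pt (1::'a,0::'a,0::'a)) m)"
  have Jid: "is_ideal J" unfolding J_def by (intro is_ideal_sum is_ideal_fat is_ideal_pow)
  have fatJ: "\<And>f. f \<in> ideal_fat Yp m \<Longrightarrow> f \<in> J"
  proof -
    fix f assume "f \<in> ideal_fat Yp m"
    moreover have "0 \<in> ideal_pow (ideal_pt (1::'a,0::'a,0::'a)) m" by (rule ideal_0[OF is_ideal_pow])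
    ultimately show "f \<in> J" unfolding J_def ideal_sum_def by force
  qed
  have powJ: "\<And>f. f \<in> ideal_pow (ideal_pt (1::'a,0::'a,0::'a)) m \<Longrightarrow> f \<in> J"
  proof -
    fix f assume "f \<in> ideal_pow (ideal_pt (1::'a,0::'a,0::'a)) m"
    moreover have "0 \<in> ideal_fat Yp m" by (rule ideal_0[OF is_ideal_fat])
    ultimately show "f \<in> J" unfolding J_def ideal_sum_def by force
  qed
  have memJ: "\<And>cs. cnt (0,1,0) cs \<ge> m \<Longrightarrow> cnt (0,0,1) cs \<ge> m \<Longrightarrow>
      (\<forall>k\<in>{3..s}. \<forall>Q\<in>Xs k. cnt Q cs \<ge> m) \<Longrightarrow> prod_list (map lin cs) \<in> J"
  proof -
    fix cs :: "'a pt3 list"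
    assume a: "cnt (0,1,0) cs \<ge> m" "cnt (0,0,1) cs \<ge> m" "\<forall>k\<in>{3..s}. \<forall>Q\<in>Xs k. cnt Q cs \<ge> m"
    have "\<forall>Q\<in>Yp. cnt Q cs \<ge> m"
    proof
      fix Q assume "Q \<in> Yp"
      then have "Q = (0,1,0) \<or> Q = (0,0,1) \<or> (\<exists>k\<in>{3..s}. Q \<in> Xs k)" using ptcases Yp_def by blast
      then show "cnt Q cs \<ge> m" using a by blast
    qed
    then show "prod_list (map lin cs) \<in> J" by (intro fatJ fat_mem)
  qed
  define d where "d = m * s - 2"
  define good where "good k \<longleftrightarrow> (\<forall>\<mu>. mdeg \<mu> = d \<and> k \<le> lvl \<mu> \<longrightarrow> Poly_Mapping.single \<mu> (1::'a) \<in> J)" for k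
  define U where "U = concat (map (\<lambda>j. replicate m (Ls j)) [3..<Suc s])"
  have cntU: "\<And>k Q. k \<in> {3..s} \<Longrightarrow> Q \<in> Xs k \<Longrightarrow> cnt Q U \<ge> m"
  proof -
    fix k Q assume kQ: "k \<in> {3..s}" "Q \<in> Xs k"
    have "cnt Q (replicate m (Ls k)) = m" using onL[of k Q] kQ by simp
    moreover have "k \<in> set [3..<Suc s]" using kQ by auto
    ultimately show "cnt Q U \<ge> m" unfolding U_def using cnt_concat[of k "[3..<Suc s]" Q "\<lambda>j. replicate m (Ls j)"]
      by simp
  qed
  have "length [3..<Suc s] = s - 2" by (simp, arith)
  then have lenU: "length U = m * (s - 2)" unfolding U_def len_crep by simp
  have prodU: "prod_list (map fst U) \<noteq> 0" unfolding U_def by (rule prod_crep) (use Lfst in auto)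
  have base: "good m"
    unfolding good_def
  proof (intro allI impI)
    fix \<mu> :: monom assume "mdeg \<mu> = d \<and> m \<le> lvl \<mu>"
    then have lv: "m \<le> lvl \<mu>" by simp
    obtain a b c where abc: "\<mu> = (a,b,c)" by (cases \<mu>) auto
    have "cnt (1,0,0) (replicate b (0,1,0) @ replicate c (0,0,1) @ replicate a (1::'a,0::'a,0::'a)) \<ge> m"
      using lv abc by (simp add: on_line_def lvl_def)
    then have "prod_list (map lin (replicate b (0,1,0) @ replicate c (0,0,1) @ replicate a (1::'a,0::'a,0::'a)))
       \<in> ideal_pow (ideal_pt (1,0,0)) m" by (rule pow_mem)
    then have "Poly_Mapping.single (a,b,c) (1::'a) \<in> ideal_pow (ideal_pt (1,0,0)) m"
      by (simp only: mono_prod)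
    then show "Poly_Mapping.single \<mu> 1 \<in> J" using powJ abc by simp
  qed
  have caseA: "\<And>a b c. mdeg (a,b,c) = d \<Longrightarrow> b \<le> m - 2 \<Longrightarrow> c \<le> m - 2 \<Longrightarrow> b + c \<le> m - 1 \<Longrightarrow>
      good (b + c + 1) \<Longrightarrow> Poly_Mapping.single (a,b,c) 1 \<in> J"
  proof -
    fix a b c assume md: "mdeg (a,b,c) = d" and bc: "b \<le> m - 2" "c \<le> m - 2" "b + c \<le> m - 1"
      and g: "good (b + c + 1)"
    define e where "e = 2*m - 2 - b - c"
    define cs where "cs = replicate e (1::'a,0::'a,0::'a) @ U"
    have len: "length cs + b + c = d"
      unfolding cs_def d_def e_def using lenU arithA[of s b c m] s2 m bc by simp
    have a_eq: "a = length cs" using len md by (simp add: mdeg_def)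
    have nz: "prod_list (map fst cs) \<noteq> 0" unfolding cs_def using prodU by simp
    define L where "L = replicate b (0,1,0) @ replicate c (0,0,1) @ cs"
    have "prod_list (map lin L) \<in> J"
    proof (rule memJ)
      have "cnt (0,1,0) L \<ge> c + e" unfolding L_def cs_def by (simp add: on_line_def)
      moreover have "c + e \<ge> m" unfolding e_def using arithC[OF bc(1,2)] m s2 by simp
      ultimately show "cnt (0,1,0) L \<ge> m" by linarith
      have "cnt (0,0,1) L \<ge> b + e" unfolding L_def cs_def by (simp add: on_line_def)
      moreover have "b + e \<ge> m" unfolding e_def using arithD[OF bc(1,2)] m s2 by simp
      ultimately show "cnt (0,0,1) L \<ge> m" by linarith
      show "\<forall>k\<in>{3..s}. \<forall>Q\<in>Xs k. cnt Q L \<ge> m"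
      proof (intro ballI)
        fix k Q assume "k \<in> {3..s}" "Q \<in> Xs k"
        then have "cnt Q U \<ge> m" by (rule cntU)
        then show "cnt Q L \<ge> m" unfolding L_def cs_def by simp
      qed
    qed
    then have GL: "prod_list (map lin (replicate b (0,1,0) @ replicate c (0,0,1) @ cs)) \<in> J"
      unfolding L_def .
    have gg: "\<forall>\<mu>. mdeg \<mu> = d \<and> b + c + 1 \<le> lvl \<mu> \<longrightarrow> Poly_Mapping.single \<mu> (1::'a) \<in> J"
      using g unfolding good_def .
    have "Poly_Mapping.single (length cs, b, c) 1 \<in> J" by (rule step[OF Jid gg GL len nz])
    then show "Poly_Mapping.single (a,b,c) 1 \<in> J" using a_eq by simp
  qed
  have listW: "\<And>k g. k \<in> {3..s} \<Longrightarrow> (\<forall>Q\<in>Xs k. on_line (g Q) Q \<and> fst (g Q) \<noteq> 0) \<Longrightarrow>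
     \<exists>cs. length cs + (m - 1) = d \<and> prod_list (map fst cs) \<noteq> 0 \<and>
       (\<forall>j\<in>{3..s}. \<forall>Q\<in>Xs j. cnt Q cs \<ge> m) \<and>
       cnt (0,1,0) cs \<ge> m - k \<and> cnt (0,0,1) cs \<ge> m - k \<and>
       (\<forall>E. fst E = 0 \<and> (\<forall>Q\<in>Xs k. on_line (g Q) E) \<longrightarrow> cnt E cs \<ge> m)"
  proof -
    fix k and g :: "'a pt3 \<Rightarrow> 'a pt3"
    assume k: "k \<in> {3..s}" and gq: "\<forall>Q\<in>Xs k. on_line (g Q) Q \<and> fst (g Q) \<noteq> 0"
    have finXk: "finite (Xs k)" using cardXs[of k] k by (intro card_ge_0_finite) auto
    define qs where "qs = (SOME xs. set xs = Xs k \<and> distinct xs)"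
    have qs: "set qs = Xs k" "distinct qs" unfolding qs_def
      using someI_ex[OF finite_distinct_list[OF finXk]] by auto
    have lqs: "length qs = k" using distinct_card[OF qs(2)] qs(1) cardXs[of k] k by auto
    define V where "V = concat (map (\<lambda>j. replicate m (Ls j)) [3..<k]) @ replicate (m-1) (Ls k) @
        concat (map (\<lambda>j. replicate m (Ls j)) [Suc k..<Suc s])"
    define cs where "cs = replicate (m-k) (1::'a,0::'a,0::'a) @ V @ map g qs"
    have lenV: "length V = m * (k - 3) + (m - 1) + m * (s - k)" unfolding V_def length_append len_crep using k by (simp add: Suc_diff_Suc Suc_le_eq)
    have len: "length cs + (m - 1) = d" unfolding cs_def d_def
      using lenV lqs arithB[of k s m] k m by simp
    have f1: "\<forall>j\<in>set [3..<k]. fst (Ls j) \<noteq> 0" using Lfst k by auto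
    have f2: "\<forall>j\<in>set [Suc k..<Suc s]. fst (Ls j) \<noteq> 0" using Lfst k by auto
    have f3: "fst (Ls k) \<noteq> 0" using Lfst k by auto
    have nzV: "prod_list (map fst V) \<noteq> 0" unfolding V_def
      using prod_crep[OF f1, of m] prod_crep[OF f2, of m] f3 by simp
    have nzq: "prod_list (map fst (map g qs)) \<noteq> 0" using gq qs(1)
      by (auto simp: prod_list_zero_iff)
    have nz: "prod_list (map fst cs) \<noteq> 0" unfolding cs_def using nzV nzq by simp
    have cj: "\<forall>j\<in>{3..s}. \<forall>Q\<in>Xs j. cnt Q cs \<ge> m"
    proof (intro ballI)
      fix j Q assume j: "j \<in> {3..s}" and Q: "Q \<in> Xs j"
      have onQ: "on_line (Ls j) Q" using onL[of j Q] j Q by auto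
      consider "j < k" | "j = k" | "j > k" by arith
      then show "cnt Q cs \<ge> m"
      proof cases
        case 1
        then have "j \<in> set [3..<k]" using j by auto
        then have "cnt Q (concat (map (\<lambda>j. replicate m (Ls j)) [3..<k])) \<ge> m"
          using cnt_concat[of j "[3..<k]" Q "\<lambda>j. replicate m (Ls j)"] onQ by simp
        then show ?thesis unfolding cs_def V_def by simp
      next
        case 2
        have "cnt Q (map g qs) \<ge> 1" using cnt_map_one[of Q qs g Q] qs(1) Q gq 2 by auto
        moreover have "cnt Q (replicate (m-1) (Ls k)) = m - 1" using onQ 2 by simp
        ultimately show ?thesis unfolding cs_def V_def by simp
      next
        case 3
        then have "j \<in> set [Suc k..<Suc s]" using j by auto
        then have "cnt Q (concat (map (\<lambda>j. replicate m (Ls j)) [Suc k..<Suc s])) \<ge> m"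
          using cnt_concat[of j "[Suc k..<Suc s]" Q "\<lambda>j. replicate m (Ls j)"] onQ by simp
        then show ?thesis unfolding cs_def V_def by simp
      qed
    qed
    have c1: "cnt (0,1,0) cs \<ge> m - k" unfolding cs_def by (simp add: on_line_def)
    have c2: "cnt (0,0,1) cs \<ge> m - k" unfolding cs_def by (simp add: on_line_def)
    have cE: "\<forall>E. fst E = 0 \<and> (\<forall>Q\<in>Xs k. on_line (g Q) E) \<longrightarrow> cnt E cs \<ge> m"
    proof (intro allI impI)
      fix E :: "'a pt3" assume E: "fst E = 0 \<and> (\<forall>Q\<in>Xs k. on_line (g Q) E)"
      have "cnt E (map g qs) = k" using cnt_map_all[of qs g E] E qs(1) lqs by auto
      moreover have "cnt E (replicate (m-k) (1,0,0)) = m - k" using E by (simp add: on_line_def)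
      ultimately show "cnt E cs \<ge> m" unfolding cs_def using k m by simp
    qed
    show "\<exists>cs. length cs + (m - 1) = d \<and> prod_list (map fst cs) \<noteq> 0 \<and>
       (\<forall>j\<in>{3..s}. \<forall>Q\<in>Xs j. cnt Q cs \<ge> m) \<and>
       cnt (0,1,0) cs \<ge> m - k \<and> cnt (0,0,1) cs \<ge> m - k \<and>
       (\<forall>E. fst E = 0 \<and> (\<forall>Q\<in>Xs k. on_line (g Q) E) \<longrightarrow> cnt E cs \<ge> m)"
      by (rule exI[of _ cs]) (intro conjI len nz cj c1 c2 cE)
  qed
  have caseB: "\<And>a. mdeg (a, m-1, 0) = d \<Longrightarrow> Poly_Mapping.single (a, m-1, 0) 1 \<in> J"
  proof -
    fix a assume md: "mdeg (a, m-1, 0) = d"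
    have L0: "(0::'a,0::'a,1::'a) \<noteq> 0" by (simp add: zero_prod_def)
    have cardL: "card {Q\<in>X. on_line (0,0,1) Q} < s"
      using assms(5)[rule_format, OF L0] by (simp add: on_line_def)
    have nt: "\<forall>k\<in>{3..s}. (1,0,0) \<notin> Xs k \<and> (0,1,0) \<notin> Xs k" using notin3 by blast
    have o1: "on_line (0,0,1) (1::'a,0::'a,0::'a)" "on_line (0,0,1) (0,1,0)" by (simp_all add: on_line_def)
    have ne: "(1::'a,0::'a,0::'a) \<noteq> (0,1,0)" by simp
    obtain k where k: "k \<in> {3..s}" "\<forall>Q\<in>Xs k. \<not> on_line (0,0,1) Q"
      using goodk[OF finX s2 sub3 disj3 PX o1(1) E1X o1(2) ne nt cardL] by blast
    define g :: "'a pt3 \<Rightarrow> 'a pt3" where "g Q = (snd (snd Q), 0, - fst Q)" for Q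
    have gq: "\<forall>Q\<in>Xs k. on_line (g Q) Q \<and> fst (g Q) \<noteq> 0"
      using k(2) by (auto simp: g_def on_line_def algebra_simps)
    obtain cs where cs: "length cs + (m - 1) = d" "prod_list (map fst cs) \<noteq> 0"
       "\<forall>j\<in>{3..s}. \<forall>Q\<in>Xs j. cnt Q cs \<ge> m" "cnt (0,1,0) cs \<ge> m - k" "cnt (0,0,1) cs \<ge> m - k"
       "\<forall>E. fst E = 0 \<and> (\<forall>Q\<in>Xs k. on_line (g Q) E) \<longrightarrow> cnt E cs \<ge> m"
      using listW[OF k(1) gq] by blast
    define L where "L = replicate (m-1) (0,1,0) @ replicate 0 (0,0,1) @ cs"
    have "prod_list (map lin L) \<in> J"
    proof (rule memJ)
      have "cnt (0,1,0) cs \<ge> m" using cs(6) by (simp add: g_def on_line_def)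
      then show "cnt (0,1,0) L \<ge> m" unfolding L_def by simp
      have "cnt (0,0,1) L \<ge> (m - 1) + (m - k)" unfolding L_def using cs(5) by (simp add: on_line_def)
      then show "cnt (0,0,1) L \<ge> m" using k m by auto
      show "\<forall>k\<in>{3..s}. \<forall>Q\<in>Xs k. cnt Q L \<ge> m"
      proof (intro ballI)
        fix k Q assume "k \<in> {3..s}" "Q \<in> Xs k"
        then have "cnt Q cs \<ge> m" using cs(3) by blast
        moreover have "cnt Q L \<ge> cnt Q cs" unfolding L_def by simp
        ultimately show "cnt Q L \<ge> m" by linarith
      qed
    qed
    then have GL: "prod_list (map lin (replicate (m-1) (0,1,0) @ replicate 0 (0,0,1) @ cs)) \<in> J"
      unfolding L_def .
    have gm: "\<forall>\<mu>. mdeg \<mu> = d \<and> (m-1) + 0 + 1 \<le> lvl \<mu> \<longrightarrow> Poly_Mapping.single \<mu> (1::'a) \<in> J"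
      using base m unfolding good_def by simp
    have len': "length cs + (m-1) + 0 = d" using cs(1) by simp
    have "Poly_Mapping.single (length cs, m-1, 0) 1 \<in> J" by (rule step[OF Jid gm GL len' cs(2)])
    moreover have "a = length cs" using md cs(1) by (simp add: mdeg_def)
    ultimately show "Poly_Mapping.single (a, m-1, 0) 1 \<in> J" by simp
  qed
  have caseC: "\<And>a. mdeg (a, 0, m-1) = d \<Longrightarrow> Poly_Mapping.single (a, 0, m-1) 1 \<in> J"
  proof -
    fix a assume md: "mdeg (a, 0, m-1) = d"
    have L0: "(0::'a,1::'a,0::'a) \<noteq> 0" by (simp add: zero_prod_def)
    have cardL: "card {Q\<in>X. on_line (0,1,0) Q} < s"
      using assms(5)[rule_format, OF L0] by (simp add: on_line_def)
    have nt: "\<forall>k\<in>{3..s}. (1,0,0) \<notin> Xs k \<and> (0,0,1) \<notin> Xs k" using notin3 by blast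
    have o1: "on_line (0,1,0) (1::'a,0::'a,0::'a)" "on_line (0,1,0) (0,0,1)" by (simp_all add: on_line_def)
    have ne: "(1::'a,0::'a,0::'a) \<noteq> (0,0,1)" by simp
    obtain k where k: "k \<in> {3..s}" "\<forall>Q\<in>Xs k. \<not> on_line (0,1,0) Q"
      using goodk[OF finX s2 sub3 disj3 PX o1(1) E2X o1(2) ne nt cardL] by blast
    define g :: "'a pt3 \<Rightarrow> 'a pt3" where "g Q = (- fst (snd Q), fst Q, 0)" for Q
    have gq: "\<forall>Q\<in>Xs k. on_line (g Q) Q \<and> fst (g Q) \<noteq> 0"
      using k(2) by (auto simp: g_def on_line_def algebra_simps)
    obtain cs where cs: "length cs + (m - 1) = d" "prod_list (map fst cs) \<noteq> 0"
       "\<forall>j\<in>{3..s}. \<forall>Q\<in>Xs j. cnt Q cs \<ge> m" "cnt (0,1,0) cs \<ge> m - k" "cnt (0,0,1) cs \<ge> m - k"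
       "\<forall>E. fst E = 0 \<and> (\<forall>Q\<in>Xs k. on_line (g Q) E) \<longrightarrow> cnt E cs \<ge> m"
      using listW[OF k(1) gq] by blast
    define L where "L = replicate 0 (0,1,0) @ replicate (m-1) (0,0,1) @ cs"
    have "prod_list (map lin L) \<in> J"
    proof (rule memJ)
      have "cnt (0,0,1) cs \<ge> m" using cs(6) by (simp add: g_def on_line_def)
      then show "cnt (0,0,1) L \<ge> m" unfolding L_def by simp
      have "cnt (0,1,0) L \<ge> (m - 1) + (m - k)" unfolding L_def using cs(4) by (simp add: on_line_def)
      then show "cnt (0,1,0) L \<ge> m" using k m by auto
      show "\<forall>k\<in>{3..s}. \<forall>Q\<in>Xs k. cnt Q L \<ge> m"
      proof (intro ballI)
        fix k Q assume "k \<in> {3..s}" "Q \<in> Xs k"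
        then have "cnt Q cs \<ge> m" using cs(3) by blast
        moreover have "cnt Q L \<ge> cnt Q cs" unfolding L_def by simp
        ultimately show "cnt Q L \<ge> m" by linarith
      qed
    qed
    then have GL: "prod_list (map lin (replicate 0 (0,1,0) @ replicate (m-1) (0,0,1) @ cs)) \<in> J"
      unfolding L_def .
    have gm: "\<forall>\<mu>. mdeg \<mu> = d \<and> 0 + (m-1) + 1 \<le> lvl \<mu> \<longrightarrow> Poly_Mapping.single \<mu> (1::'a) \<in> J"
      using base m unfolding good_def by simp
    have len': "length cs + 0 + (m-1) = d" using cs(1) by simp
    have "Poly_Mapping.single (length cs, 0, m-1) 1 \<in> J" by (rule step[OF Jid gm GL len' cs(2)])
    moreover have "a = length cs" using md cs(1) by (simp add: mdeg_def)
    ultimately show "Poly_Mapping.single (a, 0, m-1) 1 \<in> J" by simp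
  qed
  have ind: "j \<le> m \<Longrightarrow> good (m - j)" for j
  proof (induction j)
    case 0 then show ?case using base by simp
  next
    case (Suc j)
    then have IH: "good (m - j)" by simp
    show ?case unfolding good_def
    proof (intro allI impI)
      fix \<mu> :: monom assume h: "mdeg \<mu> = d \<and> m - Suc j \<le> lvl \<mu>"
      obtain a b c where abc: "\<mu> = (a,b,c)" by (cases \<mu>) auto
      show "Poly_Mapping.single \<mu> 1 \<in> J"
      proof (cases "m - j \<le> lvl \<mu>")
        case True then show ?thesis using IH h unfolding good_def by blast
      next
        case False
        then have "\<not> m - j \<le> b + c" "m - Suc j \<le> b + c" using h abc by (simp_all add: lvl_def)
        then have lv: "b + c = m - Suc j" by (rule arithE)
        have md: "mdeg (a,b,c) = d" using h abc by simp
        show ?thesis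
        proof (cases "b \<le> m - 2 \<and> c \<le> m - 2")
          case True
          have "b + c + 1 = m - j" using lv Suc.prems by simp
          then have "good (b + c + 1)" using IH by simp
          then show ?thesis using caseA[OF md] True lv abc by simp
        next
          case False
          then have "(b = m - 1 \<and> c = 0) \<or> (b = 0 \<and> c = m - 1)" using lv m by auto
          then show ?thesis using caseB caseC md abc by auto
        qed
      qed
    qed
  qed
  have g0: "good 0" using ind[of m] by simp
  show "homog (m * s - 2) \<subseteq> ideal_sum (ideal_fat (X - {(1, 0, 0)}) m) (ideal_pow (ideal_pt (1, 0, 0)) m)"
  proof
    fix f :: "'a mpoly3" assume f: "f \<in> homog (m * s - 2)"
    have "f \<in> J" using span[OF Jid g0[unfolded good_def] f[folded d_def]] by auto
    then show "f \<in> ideal_sum (ideal_fat (X - {(1, 0, 0)}) m) (ideal_pow (ideal_pt (1, 0, 0)) m)"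
      unfolding J_def Yp_def .
  qed
qed

end
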